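(* Let $\varepsilon\in(0,1]$, $L\in[0,\infty)$, $q\in(1,\infty)$, let $b\in[1,\infty)$ satisfy $\max\{1,2L\}=\varepsilon b^{q-1}$, let $K\in\mathbb N\cap[\frac{2Lb}{\varepsilon},\frac{2Lb}{\varepsilon}+1]$, let $f\colon\mathbb R\to\mathbb R$ satisfy $|f(x)-f(y)|\le L|x-y|$ for all $x,y\in\mathbb R$, let $\mathfrak x_k=-b+\frac{2kb}{K}$ and $c_k=\frac{K(f(\mathfrak x_{\min\{k+1,K\}})-2f(\mathfrak x_k)+f(\mathfrak x_{\max\{k-1,0\}}))}{2b}$ for $k\in\{0,\dots,K\}$, let $\mathbf F=\mathbf A_{1,f(\mathfrak x_0)}\bullet\bigl(\bigoplus_{k=0}^K(c_k\circledast(\mathfrak i_1\bullet\mathbf A_{1,-\mathfrak x_k}))\bigr)$, and let $\mathfrak r(x)=\max\{x,0\}$. Then (i) $|(\mathcal R_{\mathfrak r}(\mathbf F))(x)-(\mathcal R_{\mathfrak r}(\mathbf F))(y)|\le L|x-y|$ for all $x,y\in\mathbb R$; (ii) $\sup_{x\in[-b,b]}|(\mathcal R_{\mathfrak r}(\mathbf F))(x)-f(x)|\le\frac{2Lb}{K}\le\varepsilon$; (iii) $|(\mathcal R_{\mathfrak r}(\mathbf F))(x)-f(x)|\le\varepsilon\max\{1,|x|^q\}$ for all $x\in\mathbb R$; (iv) $\mathbb D_1(\mathbf F)\le2(\max\{1,2L\})^{q/(q-1)}\varepsilon^{-q/(q-1)}+1$; and (v) $\mathcal P(\mathbf F)=3\mathbb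 D_1(\mathbf F)+1\le12(\max\{1,2L\})^{q/(q-1)}\varepsilon^{-q/(q-1)}$.
   Context: Artificial neural networks (ANNs). Let $\mathbb N=\{1,2,\dots\}$ and $\mathbf N=\bigcup_{L\in\mathbb N}\bigcup_{l_0,\dots,l_L\in\mathbb N}\prod_{k=1}^L(\mathbb R^{l_k\times l_{k-1}}\times\mathbb R^{l_k})$. For $\Phi=((W_1,B_1),\dots,(W_L,B_L))$ in the $(l_0,\dots,l_L)$ component, $\mathcal P(\Phi)=\sum_{k=1}^Ll_k(l_{k-1}+1)$, $\mathcal L(\Phi)=L$, $\mathcal I(\Phi)=l_0$, $\mathcal O(\Phi)=l_L$, $\mathbb D_1(\Phi)=l_1$. For $a\in C(\mathbb R,\mathbb R)$ the realization is $(\mathcal R_a(\Phi))(x_0)=W_Lx_{L-1}+B_L$ with $x_k=\mathfrak M_{a,l_k}(W_kx_{k-1}+B_k)$, $k=1,\dots,L-1$, $\mathfrak M_{a,m}$ applying $a$ componentwise. $\operatorname I_n$ is the identity matrix; $\mathbf A_{W,B}=((W,B))$ (for reals $w,b$, $\mathbf A_{w,b}$ has $1\times1$ weight $w$ and bias $b$). Composition: for $\Phi_1=((W_1,B_1),\dots,(W_L,B_L))$, $\Phi_2=((\mathscr W_1,\mathscr B_1),\dots,(\mathscr W_{\mathfrak L},\mathscr B_{\mathfrak L}))$ with $\mathcal I(\Phi_1)=\mathcal O(\Phi_2)$, $\Phi_1\bullet\Phi_2=((\mathscr W_1,\mathscr B_1),\dots,(\mathscr W_{\mathfrak L-1},\mathscr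 B_{\mathfrak L-1}),(W_1\mathscr W_{\mathfrak L},W_1\mathscr B_{\mathfrak L}+B_1),(W_2,B_2),\dots,(W_L,B_L))$. $\lambda\circledast\Phi=\mathbf A_{\lambda\operatorname I_{\mathcal O(\Phi)},0}\bullet\Phi$. $\mathbf P_n(\Phi_1,\dots,\Phi_n)$ (equal lengths) has $k$-th layer $(\operatorname{diag}(W_{1,k},\dots,W_{n,k}),(B_{1,k},\dots,B_{n,k}))$. $\mathfrak S_{m,n}=\mathbf A_{(\operatorname I_m\cdots\operatorname I_m),0}$, $\mathfrak T_{m,n}=\mathbf A_{(\operatorname I_m\cdots\operatorname I_m)^\top,0}$ ($n$ blocks). For $\Phi_u,\dots,\Phi_v$ with equal $\mathcal L,\mathcal I,\mathcal O$: $\bigoplus_{k=u}^v\Phi_k=\mathfrak S_{\mathcal O(\Phi_u),v-u+1}\bullet([\mathbf P_{v-u+1}(\Phi_u,\dots,\Phi_v)]\bullet\mathfrak T_{\mathcal I(\Phi_u),v-u+1})$. $\mathfrak i_n=((\operatorname I_n,0),(\operatorname I_n,0))$. *)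

theory Defs
  imports Complex_Main
begin

text \<open>ANNs are represented as lists of layers (W, B); a matrix W is a list of
rows (real list list), a vector is a real list. A layer in component
(l_{k-1}, l_k) has W with l_k rows of length l_{k-1} and B of length l_k.\<close>

type_synonym mat = "real list list"
type_synonym layer = "mat \<times> real list"
type_synonym ann = "layer list"

definition ncols :: "mat \<Rightarrow> nat" where
  "ncols M = (case M of [] \<Rightarrow> 0 | r # _ \<Rightarrow> length r)"

definition mat_vec :: "mat \<Rightarrow> real list \<Rightarrow> real list" where
  "mat_vec M x = map (\<lambda>r. sum_list (map2 (*) r x)) M"

definition vec_add :: "real list \<Rightarrow> real list \<Rightarrow> real list" where
  "vec_add x y = map2 (+) x y"

definition mat_mul :: "mat \<Rightarrow> mat \<Rightarrow> mat" where
  "mat_mul A B = map (\<lambda>r. mat_vec (transpose B) r) A"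

definition idm :: "nat \<Rightarrow> mat" where
  "idm n = map (\<lambda>i. map (\<lambda>j. if i = j then 1 else 0) [0..<n]) [0..<n]"

definition zvec :: "nat \<Rightarrow> real list" where
  "zvec n = replicate n 0"

fun realize :: "(real \<Rightarrow> real) \<Rightarrow> ann \<Rightarrow> real list \<Rightarrow> real list" where
  "realize a [] x = x"
| "realize a [(W, B)] x = vec_add (mat_vec W x) B"
| "realize a ((W, B) # l # ls) x = realize a (l # ls) (map a (vec_add (mat_vec W x) B))"

definition relu :: "real \<Rightarrow> real" where
  "relu x = max x 0"

definition ann_in :: "ann \<Rightarrow> nat" where
  "ann_in \<Phi> = ncols (fst (hd \<Phi>))"

definition ann_out :: "ann \<Rightarrow> nat" where
  "ann_out \<Phi> = length (snd (last \<Phi>))"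

definition ann_len :: "ann \<Rightarrow> nat" where
  "ann_len \<Phi> = length \<Phi>"

definition ann_dims :: "ann \<Rightarrow> nat list" where
  "ann_dims \<Phi> = ann_in \<Phi> # map (\<lambda>l. length (snd l)) \<Phi>"

definition ann_params :: "ann \<Rightarrow> nat" where
  "ann_params \<Phi> = sum_list (map2 (\<lambda>a b. b * (a + 1)) (ann_dims \<Phi>) (tl (ann_dims \<Phi>)))"

definition ann_D1 :: "ann \<Rightarrow> nat" where
  "ann_D1 \<Phi> = length (snd (hd \<Phi>))"

definition annA :: "mat \<Rightarrow> real list \<Rightarrow> ann" where
  "annA W B = [(W, B)]"

definition annA1 :: "real \<Rightarrow> real \<Rightarrow> ann" where
  "annA1 w b = [([[w]], [b])]"

text \<open>Composition \<Phi>1 \<bullet> \<Phi>2 (realizes \<R>(\<Phi>1) o \<R>(\<Phi>2)).\<close>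
definition ann_comp :: "ann \<Rightarrow> ann \<Rightarrow> ann" where
  "ann_comp \<Phi>1 \<Phi>2 =
     (let (W1, B1) = hd \<Phi>1; (WL, BL) = last \<Phi>2 in
      butlast \<Phi>2 @ [(mat_mul W1 WL, vec_add (mat_vec W1 BL) B1)] @ tl \<Phi>1)"

definition ann_scale :: "real \<Rightarrow> ann \<Rightarrow> ann" where
  "ann_scale c \<Phi> = ann_comp (annA (map (map (\<lambda>t. c * t)) (idm (ann_out \<Phi>))) (zvec (ann_out \<Phi>))) \<Phi>"

fun blockdiag :: "mat list \<Rightarrow> mat" where
  "blockdiag [] = []"
| "blockdiag (M # Ms) =
     map (\<lambda>r. r @ replicate (sum_list (map ncols Ms)) 0) M
     @ map (\<lambda>r. replicate (ncols M) 0 @ r) (blockdiag Ms)"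

text \<open>Parallelization \<P>_n(\<Phi>_1,...,\<Phi>_n) of networks of equal length.\<close>
definition ann_par :: "ann list \<Rightarrow> ann" where
  "ann_par Ps = map (\<lambda>k. (blockdiag (map (\<lambda>\<Phi>. fst (\<Phi> ! k)) Ps),
                          concat (map (\<lambda>\<Phi>. snd (\<Phi> ! k)) Ps)))
                    [0..<length (hd Ps)]"

definition annS :: "nat \<Rightarrow> nat \<Rightarrow> ann" where
  "annS m n = annA (map (\<lambda>r. concat (replicate n r)) (idm m)) (zvec m)"

definition annT :: "nat \<Rightarrow> nat \<Rightarrow> ann" where
  "annT m n = annA (concat (replicate n (idm m))) (zvec (m * n))"

text \<open>Sum \<oplus>_{k=u}^v \<Phi>_k, given the list [\<Phi>_u, ..., \<Phi>_v].\<close>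
definition ann_sum :: "ann list \<Rightarrow> ann" where
  "ann_sum Ps = ann_comp (annS (ann_out (hd Ps)) (length Ps))
                  (ann_comp (ann_par Ps) (annT (ann_in (hd Ps)) (length Ps)))"

definition ann_id :: "nat \<Rightarrow> ann" where
  "ann_id n = [(idm n, zvec n), (idm n, zvec n)]"

end

theory Submission
  imports Defs
begin


definition mk :: "nat \<Rightarrow> nat \<Rightarrow> (nat \<Rightarrow> nat \<Rightarrow> real) \<Rightarrow> mat" where
  "mk n m g = map (\<lambda>i. map (\<lambda>j. g i j) [0..<m]) [0..<n]"

lemma sum_map2_upt: "sum_list (map2 (*) (map a [0..<m]) (map v [0..<m])) = (\<Sum>j<m. a j * v j)"
  by (simp add: zip_map_map zip_same_conv_map sum_set_upt_conv_sum_list_nat[symmetric] atLeast0LessThan comp_def)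

lemma mat_vec_mk: "mat_vec (mk n m g) (map v [0..<m]) = map (\<lambda>i. \<Sum>j<m. g i j * v j) [0..<n]"
  by (simp add: mat_vec_def mk_def sum_map2_upt)

lemma transpose_mk: "0 < n \<Longrightarrow> transpose (mk n m g) = mk m n (\<lambda>i j. g j i)"
  by (subst transpose_rectangle[where n=m]) (auto simp: mk_def)

lemma mat_mul_mk: assumes "0 < m" shows "mat_mul (mk n m g) (mk m p h) = mk n p (\<lambda>i k. \<Sum>j<m. g i j * h j k)"
proof -
  have "mat_mul (mk n m g) (mk m p h) = map (\<lambda>r. mat_vec (mk p m (\<lambda>i j. h j i)) r) (mk n m g)"
    using assms transpose_mk[of m p h] by (simp add: mat_mul_def)
  also have "\<dots> = mk n p (\<lambda>i k. \<Sum>j<m. g i j * h j k)"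
    apply (simp only: mk_def[of n m] map_map o_def mat_vec_mk)
    apply (simp add: mk_def mult.commute)
    done
  finally show ?thesis .
qed

lemma map_upt_Suc0: "map f [0..<Suc n] = f 0 # map (\<lambda>i. f (Suc i)) [0..<n]"
  by (induction n) auto

lemma blockdiag_mk: "blockdiag (map (\<lambda>k. [[a k]]) [m..<m+n]) = mk n n (\<lambda>i j. if i = j then a (m+i) else 0)"
proof (induction n arbitrary: m)
  case 0 then show ?case by (simp add: mk_def)
next
  case (Suc n)
  have e: "[m..<m + Suc n] = m # [Suc m..<Suc m + n]" by (simp add: upt_conv_Cons)
  have nc: "sum_list (map ncols (map (\<lambda>k. [[a k]]) xs)) = length xs" for xs
    by (induction xs) (auto simp: ncols_def)
  have r: "replicate n (0::real) = map (\<lambda>_. 0) [0..<n]" by (simp add: map_replicate_trivial)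
  show ?case unfolding e
    apply (simp only: list.map blockdiag.simps Suc.IH nc)
    apply (simp only: mk_def map_upt_Suc0)
    apply (simp add: ncols_def r del: upt_Suc)
    done
qed

lemma mk_cong: "(\<And>i j. i < n \<Longrightarrow> j < m \<Longrightarrow> g i j = g' i j) \<Longrightarrow> mk n m g = mk n m g'"
  by (simp add: mk_def)

lemma mk11: "[[a]] = mk 1 1 (\<lambda>_ _. a)" by (simp add: mk_def)
lemma map1: "[a] = map (\<lambda>_. a) [0..<1]" by simp
lemma zvec_map: "zvec n = map (\<lambda>_. 0) [0..<n]" by (simp add: zvec_def map_replicate_trivial)

lemma vec_add_map: "vec_add (map u [0..<n]) (map v [0..<n]) = map (\<lambda>i. u i + v i) [0..<n]"
  by (simp add: vec_add_def zip_map_map zip_same_conv_map)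

lemma L1: "ann_comp (ann_id 1) (annA1 1 a) = [([[1]],[a]),([[1]],[0])]"
  by (simp add: ann_comp_def ann_id_def annA1_def idm_def zvec_def mat_mul_def mat_vec_def vec_add_def)

lemma L2: "ann_scale c [([[1]],[a]),([[1]],[0])] = [([[1]],[a]),([[c]],[0])]"
  by (simp add: ann_scale_def ann_comp_def annA_def ann_out_def idm_def zvec_def mat_mul_def mat_vec_def vec_add_def)

lemma Lpar: "ann_par (map (\<lambda>k. [([[1]],[a k]),([[c k]],[0])]) [0..<Suc K]) =
  [(mk (Suc K) (Suc K) (\<lambda>i j. if i = j then 1 else 0), map a [0..<Suc K]),
   (mk (Suc K) (Suc K) (\<lambda>i j. if i = j then c i else 0), map (\<lambda>_. 0) [0..<Suc K])]"
proof -
  have b1: "blockdiag (map (\<lambda>k. [[1]]) [0..<Suc K]) = mk (Suc K) (Suc K) (\<lambda>i j. if i = j then 1 else 0)"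
    using blockdiag_mk[of "\<lambda>_. 1" 0 "Suc K"] by (simp only: add_0)
  have b2: "blockdiag (map (\<lambda>k. [[c k]]) [0..<Suc K]) = mk (Suc K) (Suc K) (\<lambda>i j. if i = j then c i else 0)"
    using blockdiag_mk[of c 0 "Suc K"] by (simp only: add_0)
  have cc: "concat (map (\<lambda>k. [a k]) xs) = map a xs" for xs by (induction xs) auto
  have cc2: "concat (map (\<lambda>k. [0::real]) xs) = map (\<lambda>_. 0) xs" for xs by (induction xs) auto
  show ?thesis
  proof -
    let ?Ps = "map (\<lambda>k. [([[1]],[a k]),([[c k]],[0::real])]) [0..<Suc K]"
    have e2: "[0..<length (hd ?Ps)] = [0,1]"
      by (simp only: hd_map[of "[0..<Suc K]"] upt_conv_Cons[of 0 "Suc K"]) (simp add: upt_rec)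
    have m1: "map (\<lambda>\<Phi>. fst (\<Phi> ! 0)) ?Ps = map (\<lambda>k. [[1]]) [0..<Suc K]"
      and m2: "map (\<lambda>\<Phi>. snd (\<Phi> ! 0)) ?Ps = map (\<lambda>k. [a k]) [0..<Suc K]"
      and m3: "map (\<lambda>\<Phi>. fst (\<Phi> ! 1)) ?Ps = map (\<lambda>k. [[c k]]) [0..<Suc K]"
      and m4: "map (\<lambda>\<Phi>. snd (\<Phi> ! 1)) ?Ps = map (\<lambda>k. [0]) [0..<Suc K]"
      by (simp_all add: comp_def del: upt_Suc)
    show ?thesis
      unfolding ann_par_def e2 by (simp only: list.map m1 m2 m3 m4 b1 b2 cc cc2)
  qed
qed

lemma idm1: "idm 1 = [[1]]" by (simp add: idm_def)
lemma concat_rep: "concat (replicate n [x]) = replicate n x" by (induction n) auto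

lemma comp_gen: "ann_comp ((W1,B1)#rest) (P2 @ [(WL,BL)]) = P2 @ [(mat_mul W1 WL, vec_add (mat_vec W1 BL) B1)] @ rest"
  by (simp add: ann_comp_def)

lemma Fstruct:
  fixes a c :: "nat \<Rightarrow> real"
  shows "ann_comp (annA1 1 f0) (ann_sum (map (\<lambda>k. [([[1]],[a k]),([[c k]],[0])]) [0..<Suc K])) =
    [(mk (Suc K) 1 (\<lambda>_ _. 1), map a [0..<Suc K]), (mk 1 (Suc K) (\<lambda>_ j. c j), [f0])]"
proof -
  let ?n = "Suc K"
  let ?Ps = "map (\<lambda>k. [([[1]],[a k]),([[c k]],[0::real])]) [0..<Suc K]"
  have hdP: "hd ?Ps = [([[1]],[a 0]),([[c 0]],[0::real])]"
    by (simp only: hd_map[of "[0..<Suc K]"] upt_conv_Cons[of 0 "Suc K"]) simp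
  have io: "ann_out (hd ?Ps) = 1" "ann_in (hd ?Ps) = 1"
    by (simp_all only: hdP ann_out_def ann_in_def) (simp_all add: ncols_def)
  have T: "annT 1 ?n = [] @ [(mk ?n 1 (\<lambda>_ _. 1), map (\<lambda>_. 0) [0..<?n])]"
    by (simp only: annT_def annA_def idm1 concat_rep zvec_map) (simp add: mk_def map_replicate_trivial del: upt_Suc)
  have S: "annS 1 ?n = [(mk 1 ?n (\<lambda>_ _. 1), map (\<lambda>_. 0) [0..<1])]"
    by (simp only: annS_def annA_def idm1 concat_rep zvec_map) (simp add: mk_def map_replicate_trivial del: upt_Suc)
  have m1: "mat_mul (mk ?n ?n (\<lambda>i j. if i = j then 1 else 0)) (mk ?n 1 (\<lambda>_ _. 1)) = mk ?n 1 (\<lambda>_ _. 1)"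
    by (simp only: mat_mul_mk zero_less_one) (rule mk_cong, simp)
  have v1: "vec_add (mat_vec (mk ?n ?n (\<lambda>i j. if i = j then 1 else 0)) (map (\<lambda>_. 0) [0..<?n])) (map a [0..<?n]) = map a [0..<?n]"
    by (simp add: mat_vec_mk vec_add_map del: upt_Suc)
  have PT: "ann_comp (ann_par ?Ps) (annT 1 ?n) = [(mk ?n 1 (\<lambda>_ _. 1), map a [0..<?n])] @ [(mk ?n ?n (\<lambda>i j. if i = j then c i else 0), map (\<lambda>_. 0) [0..<?n])]"
    unfolding Lpar T comp_gen m1 v1 by simp
  have m2: "mat_mul (mk 1 ?n (\<lambda>_ _. 1)) (mk ?n ?n (\<lambda>i j. if i = j then c i else 0)) = mk 1 ?n (\<lambda>_ j. c j)"
    by (simp only: mat_mul_mk zero_less_Suc) (rule mk_cong, simp)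
  have v2: "vec_add (mat_vec (mk 1 ?n (\<lambda>_ _. 1)) (map (\<lambda>_. 0) [0..<?n])) (map (\<lambda>_. 0) [0..<1]) = map (\<lambda>_. 0) [0..<1]"
    by (simp only: mat_vec_mk vec_add_map) simp
  have SPT: "ann_sum ?Ps = [(mk ?n 1 (\<lambda>_ _. 1), map a [0..<?n])] @ [(mk 1 ?n (\<lambda>_ j. c j), map (\<lambda>_. 0) [0..<1])]"
    unfolding ann_sum_def io length_map length_upt diff_zero PT S comp_gen m2 v2 by simp
  have m3: "mat_mul (mk 1 1 (\<lambda>_ _. 1)) (mk 1 ?n (\<lambda>_ j. c j)) = mk 1 ?n (\<lambda>_ j. c j)"
    by (simp only: mat_mul_mk zero_less_one) (rule mk_cong, simp)
  have v3: "vec_add (mat_vec (mk 1 1 (\<lambda>_ _. 1)) (map (\<lambda>_. 0) [0..<1])) (map (\<lambda>_. f0) [0..<1]) = map (\<lambda>_. f0) [0..<1]"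
    by (simp only: mat_vec_mk vec_add_map) simp
  have A: "annA1 1 f0 = (mk 1 1 (\<lambda>_ _. 1), map (\<lambda>_. f0) [0..<1]) # []"
    by (simp add: annA1_def mk_def)
  show ?thesis unfolding A SPT comp_gen m3 v3 by simp
qed

lemma Freal:
  fixes a c :: "nat \<Rightarrow> real"
  shows "hd (realize relu [(mk (Suc K) 1 (\<lambda>_ _. 1), map a [0..<Suc K]), (mk 1 (Suc K) (\<lambda>_ j. c j), [f0])] [x])
     = f0 + (\<Sum>j<Suc K. c j * relu (x + a j))"
proof -
  have x: "[x] = map (\<lambda>_. x) [0..<1]" by simp
  have f: "[f0] = map (\<lambda>_. f0) [0..<1]" by simp
  show ?thesis
    apply (simp only: realize.simps x f mat_vec_mk vec_add_map map_map o_def)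
    apply (simp add: add.commute)
    done
qed

lemma ncols_mk: "ncols (mk (Suc K) m g) = m"
  by (simp add: mk_def ncols_def upt_conv_Cons del: upt_Suc)

lemma Fparams:
  fixes a c :: "nat \<Rightarrow> real"
  shows "ann_D1 [(mk (Suc K) 1 (\<lambda>_ _. 1), map a [0..<Suc K]), (mk 1 (Suc K) (\<lambda>_ j. c j), [f0])] = Suc K"
   and "ann_params [(mk (Suc K) 1 (\<lambda>_ _. 1), map a [0..<Suc K]), (mk 1 (Suc K) (\<lambda>_ j. c j), [f0])] = 3 * Suc K + 1"
  by (simp_all add: ann_D1_def ann_params_def ann_dims_def ann_in_def ncols_mk)



definition cl :: "real \<Rightarrow> real" where "cl y = min 1 (max 0 y)"

lemma sbp: "(\<Sum>k<Suc n. (S k - (if k = 0 then 0 else S (k - 1))) * r k)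
   = (\<Sum>k<n. S k * (r k - r (Suc k))) + S n * (r n :: real)"
  by (induction n) (auto simp: algebra_simps)

lemma cl_sum: "(\<Sum>k<n. cl (u - real k)) = min (real n) (max 0 u)"
  by (induction n) (auto simp: cl_def)

lemma piece: assumes "j < n" "real j \<le> u" "u \<le> real j + 1"
  shows "(\<Sum>k<n. a k * cl (u - real k)) = (\<Sum>k<j. a k) + a j * (u - real j)"
  using assms
proof (induction n)
  case 0 then show ?case by simp
next
  case (Suc n)
  show ?case
  proof (cases "j < n")
    case True
    then have "cl (u - real n) = 0" using Suc.prems by (simp add: cl_def)
    then show ?thesis using Suc True by simp
  next
    case False
    then have jn: "j = n" using Suc.prems by simp
    have "(\<Sum>k<n. a k * cl (u - real k)) = (\<Sum>k<n. a k)"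
      using jn Suc.prems by (intro sum.cong) (auto simp: cl_def)
    then show ?thesis using jn Suc.prems by (simp add: cl_def)
  qed
qed

lemma cl_mono: "u \<le> v \<Longrightarrow> cl u \<le> cl v" by (simp add: cl_def)

lemma lipsum: assumes "0 \<le> A" "u \<le> v" "\<And>k. k < n \<Longrightarrow> \<bar>a k\<bar> \<le> A"
  shows "\<bar>(\<Sum>k<n. a k * cl (v - real k)) - (\<Sum>k<n. a k * cl (u - real k))\<bar> \<le> A * (v - u)"
proof -
  have "\<bar>(\<Sum>k<n. a k * cl (v - real k)) - (\<Sum>k<n. a k * cl (u - real k))\<bar>
     = \<bar>\<Sum>k<n. a k * (cl (v - real k) - cl (u - real k))\<bar>"
    by (simp add: sum_subtractf algebra_simps)
  also have "\<dots> \<le> (\<Sum>k<n. \<bar>a k * (cl (v - real k) - cl (u - real k))\<bar>)" by (rule sum_abs)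
  also have "\<dots> \<le> (\<Sum>k<n. A * (cl (v - real k) - cl (u - real k)))"
  proof (rule sum_mono)
    fix k assume "k \<in> {..<n}"
    then have "\<bar>a k\<bar> \<le> A" using assms(3) by auto
    moreover have "0 \<le> cl (v - real k) - cl (u - real k)" using cl_mono[of "u - real k" "v - real k"] assms by simp
    ultimately show "\<bar>a k * (cl (v - real k) - cl (u - real k))\<bar> \<le> A * (cl (v - real k) - cl (u - real k))"
      by (simp add: abs_mult mult_right_mono)
  qed
  also have "\<dots> = A * (min (real n) (max 0 v) - min (real n) (max 0 u))"
    by (simp add: sum_distrib_left[symmetric] sum_subtractf cl_sum)
  also have "\<dots> \<le> A * (v - u)"
  proof -
    show ?thesis using assms(1,2) by (intro mult_left_mono) auto
  qed
  finally show ?thesis .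
qed



theorem mainTheorem16:
  fixes \<epsilon> L q b :: real and K :: nat and f :: "real \<Rightarrow> real"
    and xk c :: "nat \<Rightarrow> real" and F :: ann
  assumes "0 < \<epsilon>" and "\<epsilon> \<le> 1" and "0 \<le> L" and "1 < q" and "1 \<le> b"
    and "max 1 (2 * L) = \<epsilon> * b powr (q - 1)"
    and "1 \<le> K" and "2 * L * b / \<epsilon> \<le> real K" and "real K \<le> 2 * L * b / \<epsilon> + 1"
    and "\<And>x y. \<bar>f x - f y\<bar> \<le> L * \<bar>x - y\<bar>"
    and "\<And>k. xk k = - b + 2 * real k * b / real K"
    and "\<And>k. c k = real K * (f (xk (min (k + 1) K)) - 2 * f (xk k) + f (xk (k - 1))) / (2 * b)"
    and "F = ann_comp (annA1 1 (f (xk 0)))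
               (ann_sum (map (\<lambda>k. ann_scale (c k) (ann_comp (ann_id 1) (annA1 1 (- xk k)))) [0..<K + 1]))"
  shows "(\<forall>x y. \<bar>hd (realize relu F [x]) - hd (realize relu F [y])\<bar> \<le> L * \<bar>x - y\<bar>)
    \<and> (SUP x\<in>{-b..b}. \<bar>hd (realize relu F [x]) - f x\<bar>) \<le> 2 * L * b / real K
    \<and> 2 * L * b / real K \<le> \<epsilon>
    \<and> (\<forall>x. \<bar>hd (realize relu F [x]) - f x\<bar> \<le> \<epsilon> * max 1 (\<bar>x\<bar> powr q))
    \<and> real (ann_D1 F) \<le> 2 * (max 1 (2 * L)) powr (q / (q - 1)) * \<epsilon> powr (- q / (q - 1)) + 1
    \<and> ann_params F = 3 * ann_D1 F + 1
    \<and> real (ann_params F) \<le> 12 * (max 1 (2 * L)) powr (q / (q - 1)) * \<epsilon> powr (- q / (q - 1))"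
proof -
  have Kpos: "0 < real K" using assms(7) by simp
  define h where "h = 2 * b / real K"
  have hpos: "0 < h" using Kpos assms(5) by (simp add: h_def)
  have xkh: "xk k = - b + real k * h" for k using assms(11)[of k] by (simp add: h_def)
  have xkS: "xk (Suc k) = xk k + h" for k by (simp add: xkh algebra_simps)
  have phi: "ann_scale (c k) (ann_comp (ann_id 1) (annA1 1 (- xk k))) = [([[1]],[- xk k]),([[c k]],[0])]" for k
    by (simp only: L1 L2)
  have FF: "F = [(mk (Suc K) 1 (\<lambda>_ _. 1), map (\<lambda>k. - xk k) [0..<Suc K]), (mk 1 (Suc K) (\<lambda>_ j. c j), [f (xk 0)])]"
    unfolding assms(13) phi Suc_eq_plus1[symmetric] by (rule Fstruct)
  define G where "G x = f (xk 0) + (\<Sum>j<Suc K. c j * relu (x - xk j))" for x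
  have GF: "hd (realize relu F [x]) = G x" for x
    unfolding FF Freal G_def by simp
  define D where "D k = f (xk (Suc k)) - f (xk k)" for k
  define U where "U x = (x + b) / h" for x
  define S where "S k = (if k < K then D k / h else 0)" for k
  have c': "c k = (f (xk (min (k+1) K)) - 2 * f (xk k) + f (xk (k - 1))) / h" for k
    using assms(12)[of k] Kpos assms(5) by (simp add: h_def field_simps)
  have ceq: "c k = S k - (if k = 0 then 0 else S (k - 1))" if kK: "k < Suc K" for k
  proof -
    consider "k = 0" | "0 < k" "k < K" | "k = K" using kK by (cases "k = 0") (auto simp: less_Suc_eq)
    then show ?thesis
    proof cases
      case 1 then show ?thesis using Kpos by (simp add: c' S_def D_def diff_divide_distrib)
    next
      case 2
      then have "min (k+1) K = Suc k" "Suc (k - 1) = k" "k - 1 < K" by auto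
      then show ?thesis using 2 hpos \<open>k - 1 < K\<close> by (simp add: c' S_def D_def field_simps)
    next
      case 3
      then have "Suc (k - 1) = k" using assms(7) by auto
      then show ?thesis using 3 hpos by (simp add: c' S_def D_def field_simps)
    qed
  qed
  have relu_diff: "relu y - relu (y - h) = h * cl (y / h)" for y
    using hpos by (auto simp: relu_def cl_def min_def max_def field_simps)
  have Grep: "G x = f (xk 0) + (\<Sum>k<K. D k * cl (U x - real k))" for x
  proof -
    have "(\<Sum>j<Suc K. c j * relu (x - xk j)) =
          (\<Sum>j<Suc K. (S j - (if j = 0 then 0 else S (j - 1))) * relu (x - xk j))"
      by (rule sum.cong) (auto simp: ceq)
    also have "\<dots> = (\<Sum>k<K. S k * (relu (x - xk k) - relu (x - xk (Suc k)))) + S K * relu (x - xk K)"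
      by (rule sbp)
    also have "\<dots> = (\<Sum>k<K. D k * cl (U x - real k))"
    proof -
      have "S k * (relu (x - xk k) - relu (x - xk (Suc k))) = D k * cl (U x - real k)" if "k < K" for k
      proof -
        have "relu (x - xk k) - relu (x - xk (Suc k)) = h * cl ((x - xk k) / h)"
          using relu_diff[of "x - xk k"] by (simp add: xkS algebra_simps)
        moreover have "(x - xk k) / h = U x - real k"
          using hpos by (simp add: U_def xkh field_simps)
        ultimately show ?thesis using that hpos by (simp add: S_def)
      qed
      then show ?thesis by (simp add: S_def)
    qed
    finally show ?thesis by (simp add: G_def)
  qed
  have Dbound: "\<bar>D k\<bar> \<le> L * h" for k
    using assms(10)[of "xk (Suc k)" "xk k"] hpos by (simp add: D_def xkS)
  have Lh: "0 \<le> L * h" using assms(3) hpos by simp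
  have lip1: "\<bar>G y - G x\<bar> \<le> L * (y - x)" if "x \<le> y" for x y
  proof -
    have "U x \<le> U y" using that hpos by (simp add: U_def divide_right_mono)
    from lipsum[OF Lh this, of K D] Dbound
    have "\<bar>G y - G x\<bar> \<le> L * h * (U y - U x)" by (simp add: Grep)
    also have "\<dots> = L * (y - x)" using hpos by (simp add: U_def field_simps)
    finally show ?thesis .
  qed
  have P1: "\<forall>x y. \<bar>G x - G y\<bar> \<le> L * \<bar>x - y\<bar>"
  proof (intro allI)
    fix x y
    show "\<bar>G x - G y\<bar> \<le> L * \<bar>x - y\<bar>"
    proof (cases "x \<le> y")
      case True then show ?thesis using lip1[OF True] by (simp add: abs_minus_commute)
    next
      case False then show ?thesis using lip1[of y x] by simp
    qed
  qed
  have tele: "(\<Sum>k<j. D k) = f (xk j) - f (xk 0)" for j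
    unfolding D_def by (rule sum_lessThan_telescope)
  have inner: "\<bar>G x - f x\<bar> \<le> L * h" if "-b \<le> x" "x \<le> b" for x
  proof -
    let ?u = "U x"
    have u0: "0 \<le> ?u" using that hpos by (simp add: U_def)
    have uK: "?u \<le> real K" using that hpos Kpos by (simp add: U_def h_def field_simps)
    define j where "j = (if real K - 1 \<le> ?u then K - 1 else nat \<lfloor>?u\<rfloor>)"
    have j: "j < K \<and> real j \<le> ?u \<and> ?u \<le> real j + 1"
    proof (cases "real K - 1 \<le> ?u")
      case True then show ?thesis using assms(7) uK by (simp add: j_def of_nat_diff)
    next
      case False
      have "real (nat \<lfloor>?u\<rfloor>) = of_int \<lfloor>?u\<rfloor>" using u0 by simp
      moreover have "of_int \<lfloor>?u\<rfloor> \<le> ?u" "?u < of_int \<lfloor>?u\<rfloor> + 1" by linarith+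
      moreover have "\<lfloor>?u\<rfloor> < int K" using False by (simp add: floor_less_iff)
      ultimately show ?thesis using False by (simp add: j_def)
    qed
    define l where "l = ?u - real j"
    have l01: "0 \<le> l" "l \<le> 1" using j by (auto simp: l_def)
    have Gx: "G x = f (xk j) + D j * l"
      using Grep[of x] piece[of j K ?u D] j tele[of j] by (simp add: l_def)
    have xe: "x = xk j + l * h" using hpos by (simp add: l_def U_def xkh field_simps)
    have e: "G x - f x = (1 - l) * (f (xk j) - f x) + l * (f (xk (Suc j)) - f x)"
      by (simp add: Gx D_def algebra_simps)
    have b1: "\<bar>f (xk j) - f x\<bar> \<le> L * h"
    proof -
      have "\<bar>f (xk j) - f x\<bar> \<le> L * \<bar>xk j - x\<bar>" by (rule assms(10))
      also have "\<dots> = L * (l * h)" using l01 hpos by (simp add: xe)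
      also have "\<dots> \<le> L * h" using l01 hpos assms(3) by (simp add: mult_left_le_one_le mult_left_mono)
      finally show ?thesis .
    qed
    have b2: "\<bar>f (xk (Suc j)) - f x\<bar> \<le> L * h"
    proof -
      have "\<bar>f (xk (Suc j)) - f x\<bar> \<le> L * \<bar>xk (Suc j) - x\<bar>" by (rule assms(10))
      also have "\<dots> = L * ((1 - l) * h)" using l01 hpos by (simp add: xe xkS algebra_simps)
      also have "\<dots> \<le> L * h" using l01 hpos assms(3) by (simp add: mult_left_le_one_le mult_left_mono)
      finally show ?thesis .
    qed
    have "\<bar>G x - f x\<bar> \<le> (1 - l) * \<bar>f (xk j) - f x\<bar> + l * \<bar>f (xk (Suc j)) - f x\<bar>"
      unfolding e using l01 by (metis abs_mult abs_of_nonneg abs_triangle_ineq diff_ge_0_iff_ge)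
    also have "\<dots> \<le> (1 - l) * (L * h) + l * (L * h)"
      using l01 b1 b2 by (intro add_mono mult_left_mono) auto
    also have "\<dots> = L * h" by (simp add: algebra_simps)
    finally show ?thesis .
  qed
  have hval: "L * h = 2 * L * b / real K" by (simp add: h_def)
  have P2: "(SUP x\<in>{-b..b}. \<bar>G x - f x\<bar>) \<le> 2 * L * b / real K"
    using assms(5) inner unfolding hval[symmetric] by (intro cSUP_least) auto
  have P3: "2 * L * b / real K \<le> \<epsilon>"
    using assms(8) assms(1) Kpos by (simp add: field_simps)
  have bq: "L * \<bar>x\<bar> \<le> \<epsilon> * max 1 (\<bar>x\<bar> powr q)" if "b \<le> \<bar>x\<bar>" for x
  proof -
    have ax: "0 < \<bar>x\<bar>" using that assms(5) by simp
    have "\<bar>x\<bar> powr q = \<bar>x\<bar> * \<bar>x\<bar> powr (q - 1)"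
      using ax powr_add[of "\<bar>x\<bar>" 1 "q - 1"] by simp
    moreover have "b powr (q - 1) \<le> \<bar>x\<bar> powr (q - 1)"
      using that assms(4,5) by (intro powr_mono2) auto
    ultimately have "\<epsilon> * \<bar>x\<bar> powr q \<ge> \<bar>x\<bar> * (\<epsilon> * b powr (q - 1))"
      using assms(1) ax by (simp add: mult_left_mono)
    moreover have "\<epsilon> * b powr (q - 1) \<ge> L" using assms(6)[symmetric] assms(3) by linarith
    ultimately have "\<epsilon> * \<bar>x\<bar> powr q \<ge> \<bar>x\<bar> * L"
      using ax by (meson mult_left_mono less_imp_le order_trans)
    moreover have "\<epsilon> * \<bar>x\<bar> powr q \<le> \<epsilon> * max 1 (\<bar>x\<bar> powr q)" using assms(1) by simp
    ultimately show ?thesis by (simp add: mult.commute)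
  qed
  have xkK: "xk K = b" using Kpos by (simp add: xkh h_def)
  have xk0: "xk 0 = - b" by (simp add: xkh)
  have P4: "\<forall>x. \<bar>G x - f x\<bar> \<le> \<epsilon> * max 1 (\<bar>x\<bar> powr q)"
  proof
    fix x
    consider "x < -b" | "-b \<le> x" "x \<le> b" | "b < x" by linarith
    then show "\<bar>G x - f x\<bar> \<le> \<epsilon> * max 1 (\<bar>x\<bar> powr q)"
    proof cases
      case 1
      have "U x < 0" using 1 hpos by (simp add: U_def divide_neg_pos)
      then have "G x = f (- b)" unfolding Grep xk0 by (simp add: cl_def)
      then have gb: "\<bar>G x - f x\<bar> \<le> L * \<bar>x\<bar>"
      proof -
        have "L * (- b - x) \<le> L * \<bar>x\<bar>" using 1 assms(3,5) by (intro mult_left_mono) auto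
        moreover have "\<bar>f (- b) - f x\<bar> \<le> L * \<bar>- b - x\<bar>" by (rule assms(10))
        moreover have "\<bar>- b - x\<bar> = - b - x" using 1 by simp
        ultimately show ?thesis using \<open>G x = f (- b)\<close> by simp
      qed
      have "b \<le> \<bar>x\<bar>" using 1 by linarith
      from order_trans[OF gb bq[OF this]] show ?thesis .
    next
      case 2
      have "\<bar>G x - f x\<bar> \<le> \<epsilon>" using inner[OF 2] P3 hval by simp
      also have "\<epsilon> \<le> \<epsilon> * max 1 (\<bar>x\<bar> powr q)" using assms(1) by simp
      finally show ?thesis .
    next
      case 3
      have "U x \<ge> real K" using 3 hpos Kpos by (simp add: U_def h_def field_simps)
      then have "(\<Sum>k<K. D k * cl (U x - real k)) = (\<Sum>k<K. D k)"
        by (intro sum.cong) (auto simp: cl_def)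
      then have "G x = f b" unfolding Grep tele xkK by simp
      then have gb: "\<bar>G x - f x\<bar> \<le> L * \<bar>x\<bar>"
      proof -
        have "L * (x - b) \<le> L * \<bar>x\<bar>" using 3 assms(3,5) by (intro mult_left_mono) auto
        moreover have "\<bar>f x - f b\<bar> \<le> L * \<bar>x - b\<bar>" by (rule assms(10))
        moreover have "\<bar>x - b\<bar> = x - b" using 3 by simp
        moreover have "\<bar>G x - f x\<bar> = \<bar>f x - f b\<bar>" using \<open>G x = f b\<close> by simp
        ultimately show ?thesis by simp
      qed
      have "b \<le> \<bar>x\<bar>" using 3 by linarith
      from order_trans[OF gb bq[OF this]] show ?thesis .
    qed
  qed
  have D1: "ann_D1 F = Suc K" and PP: "ann_params F = 3 * Suc K + 1"
    unfolding FF by (rule Fparams)+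
  define M where "M = max 1 (2 * L)"
  have Me: "M = \<epsilon> * b powr (q - 1)" unfolding M_def by (rule assms(6))
  have qq: "(q - 1) * (q / (q - 1)) = q" using assms(4) by simp
  have bq1: "b powr (q - 1) * b = b powr q"
  proof -
    have "b powr (q - 1 + 1) = b powr (q - 1) * b powr 1" by (rule powr_add)
    then show ?thesis using assms(5) by simp
  qed
  have R: "M powr (q / (q - 1)) * \<epsilon> powr (- q / (q - 1)) = b powr q"
  proof -
    have "M powr (q / (q - 1)) = \<epsilon> powr (q / (q - 1)) * (b powr (q - 1)) powr (q / (q - 1))"
      unfolding Me using assms(1) by (intro powr_mult)
    also have "(b powr (q - 1)) powr (q / (q - 1)) = b powr q"
      unfolding powr_powr qq ..
    finally have a: "M powr (q / (q - 1)) = \<epsilon> powr (q / (q - 1)) * b powr q" .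
    have m: "- q / (q - 1) = - (q / (q - 1))" by (rule minus_divide_left[symmetric])
    have e: "\<epsilon> powr (- q / (q - 1)) = 1 / \<epsilon> powr (q / (q - 1))"
      unfolding m by (rule powr_minus_divide)
    have "\<epsilon> powr (q / (q - 1)) > 0" using assms(1) by simp
    then show ?thesis unfolding a e by simp
  qed
  have Rge: "1 \<le> b powr q" using assms(4,5) by (intro ge_one_powr_ge_zero) auto
  have KR: "real K \<le> b powr q + 1"
  proof -
    have "2 * L \<le> M" unfolding M_def by simp
    then have "2 * L * b / \<epsilon> \<le> M * b / \<epsilon>" using assms(1,5) by (intro divide_right_mono mult_right_mono) auto
    also have "M * b / \<epsilon> = b powr (q - 1) * b" unfolding Me using assms(1) by simp
    also have "\<dots> = b powr q" by (rule bq1)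
    finally show ?thesis using assms(9) by linarith
  qed
  have R2: "2 * M powr (q / (q - 1)) * \<epsilon> powr (- q / (q - 1)) = 2 * b powr q"
    by (simp only: mult.assoc R)
  have R12: "12 * M powr (q / (q - 1)) * \<epsilon> powr (- q / (q - 1)) = 12 * b powr q"
    by (simp only: mult.assoc R)
  have rD: "real (ann_D1 F) = real K + 1" using D1 by simp
  have rP: "real (ann_params F) = 3 * real K + 4" using PP by simp
  have P5: "real (ann_D1 F) \<le> 2 * M powr (q / (q - 1)) * \<epsilon> powr (- q / (q - 1)) + 1"
    unfolding R2 rD using KR Rge by linarith
  have P7: "real (ann_params F) \<le> 12 * M powr (q / (q - 1)) * \<epsilon> powr (- q / (q - 1))"
    unfolding R12 rP using KR Rge by linarith
  have P6: "ann_params F = 3 * ann_D1 F + 1" using D1 PP by simp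
  show ?thesis
    unfolding GF using P1 P2 P3 P4 P5[unfolded M_def] P7[unfolded M_def] P6 by blast
qed

end
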